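(* Let $M\ge2$ be an integer, $\phi\in\mathbb{R}$, and let $\varphi$ be a random variable on $[0,2\pi)$ with density $f(\varphi)=\frac{M}{2\pi}\frac{\mathrm{sinc}^2(\frac M2|\phi-\varphi|_{2\pi})}{\mathrm{sinc}^2(\frac12|\phi-\varphi|_{2\pi})}$. Then $\mathbb{E}[e^{i\varphi}]=\big(1-\frac1M\big)e^{i\phi}$ and $\mathbb{E}[\sin^2(\varphi-\phi)]=\frac1M$. Consequently $\big(1+\frac{1}{M-1}\big)e^{i\varphi}$ is an unbiased estimator of $e^{i\phi}$ with variance $\Theta(1/M)$.
   Context: $|x|_{2\pi}:=\min\{|x-2\pi\ell|:\ell\in\mathbb{Z}\}$; $\mathrm{sinc}(x)=\sin(x)/x$ for $x\neq0$, $\mathrm{sinc}(0)=1$. This density is exactly the output distribution of the randomized phase estimation procedure: sample $u\sim\mathrm{Unif}[0,1)$, apply the phases $e^{-2\pi i u k/M}$ to $\frac1{\sqrt M}\sum_{k<M}e^{i\phi k}\ket k$, apply the inverse Fourier transform over $\mathbb{Z}_M$, measure $j$, output $\frac{2\pi}{M}(j+u)$. *)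

theory Defs
  imports "HOL-Probability.Probability" "HOL-Library.Landau_Symbols"
begin

definition dist2pi :: "real \<Rightarrow> real" where
  "dist2pi x = Inf ((\<lambda>l::int. \<bar>x - 2 * pi * of_int l\<bar>) ` UNIV)"

definition sinc :: "real \<Rightarrow> real" where
  "sinc x = (if x = 0 then 1 else sin x / x)"

definition qpe_density :: "nat \<Rightarrow> real \<Rightarrow> real \<Rightarrow> real" where
  "qpe_density M phi x =
     real M / (2 * pi) * (sinc (real M / 2 * dist2pi (phi - x)))\<^sup>2
       / (sinc (1 / 2 * dist2pi (phi - x)))\<^sup>2"

definition qpe_dist :: "nat \<Rightarrow> real \<Rightarrow> real measure" where
  "qpe_dist M phi = density lborel
     (\<lambda>x. ennreal (indicator {0..<2*pi} x * qpe_density M phi x))"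

definition qpe_est_var :: "nat \<Rightarrow> real \<Rightarrow> real" where
  "qpe_est_var M phi = integral\<^sup>L (qpe_dist M phi)
     (\<lambda>x. (cmod (complex_of_real (1 + 1 / (real M - 1)) * cis x - cis phi))\<^sup>2)"

end

theory Submission
  imports Defs "HOL-Real_Asymp.Real_Asymp"
begin


definition SS :: "nat \<Rightarrow> real \<Rightarrow> complex" where
  "SS M t = (\<Sum>k<M. cis (real k * t))"

definition hh :: "nat \<Rightarrow> real \<Rightarrow> real \<Rightarrow> real" where
  "hh M phi x = (cmod (SS M (phi - x)))\<^sup>2 / (2 * pi * real M)"

lemma SS_geo: "(cis t - 1) * SS M t = cis (real M * t) - 1"
proof (induction M)
  case 0 then show ?case by (simp add: SS_def)
next
  case (Suc M)
  have "SS (Suc M) t = SS M t + cis (real M * t)" by (simp add: SS_def)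
  then have "(cis t - 1) * SS (Suc M) t = cis (real M * t) - 1 + (cis t - 1) * cis (real M * t)"
    using Suc by (simp add: algebra_simps)
  also have "\<dots> = cis (real (Suc M) * t) - 1"
    by (simp add: algebra_simps cis_mult)
  finally show ?case .
qed

lemma cmod_cis_minus1: "(cmod (cis a - 1))\<^sup>2 = 4 * (sin (a/2))\<^sup>2"
proof -
  have "(cmod (cis a - 1))\<^sup>2 = (cos a - 1)\<^sup>2 + (sin a)\<^sup>2"
    by (simp add: cmod_power2)
  also have "\<dots> = 2 - 2 * cos a" by (simp add: power2_eq_square algebra_simps sin_squared_eq)
  also have "cos a = 1 - 2 * (sin (a/2))\<^sup>2" using cos_double_sin[of "a/2"] by simp
  finally show ?thesis by simp
qed

lemma SS_sin:
  assumes "sin (t/2) \<noteq> 0"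
  shows "(cmod (SS M t))\<^sup>2 = (sin (real M * t / 2))\<^sup>2 / (sin (t/2))\<^sup>2"
proof -
  have "(cmod (cis t - 1))\<^sup>2 * (cmod (SS M t))\<^sup>2 = (cmod (cis (real M * t) - 1))\<^sup>2"
    by (metis SS_geo norm_mult power_mult_distrib)
  then have "4 * (sin (t/2))\<^sup>2 * (cmod (SS M t))\<^sup>2 = 4 * (sin (real M * t / 2))\<^sup>2"
    by (simp add: cmod_cis_minus1)
  then show ?thesis using assms by (simp add: field_simps)
qed

lemma SS_per: "SS M (t - 2 * pi * of_int l) = SS M t"
proof -
  have "cis (real k * (t - 2 * pi * of_int l)) = cis (real k * t)" for k
  proof -
    have "cis (real k * (t - 2 * pi * of_int l)) = cis (real k * t) * cis (- (2 * pi * of_int (int k * l)))"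
      by (simp add: cis_mult algebra_simps)
    also have "cis (- (2 * pi * of_int (int k * l))) = 1"
      by (simp add: cis_cnj[symmetric] del: of_int_mult) 
    finally show ?thesis by simp
  qed
  then show ?thesis by (simp add: SS_def)
qed

lemma SS_neg: "SS M (- t) = cnj (SS M t)"
  by (simp add: SS_def cis_cnj)

lemma SS_zero: "SS M 0 = of_nat M"
  by (simp add: SS_def)

lemma dist2pi_eq:
  fixes t :: real
  defines "l0 \<equiv> floor (t / (2*pi) + 1/2)"
  shows "dist2pi t = \<bar>t - 2 * pi * of_int l0\<bar>" "dist2pi t \<le> pi"
proof -
  let ?u = "t / (2*pi)"
  have a: "?u - of_int l0 < 1/2" "?u - of_int l0 \<ge> -1/2"
    unfolding l0_def using floor_correct[of "t/(2*pi)+1/2"] by linarith+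
  have tu: "\<bar>t - 2 * pi * of_int l\<bar> = 2 * pi * \<bar>?u - of_int l\<bar>" for l
  proof -
    have "t - 2 * pi * of_int l = 2 * pi * (?u - of_int l)" by (simp add: field_simps)
    then show ?thesis by (simp add: abs_mult)
  qed
  have key: "\<bar>t - 2 * pi * of_int l0\<bar> \<le> pi" 
  proof -
    have "\<bar>t - 2 * pi * of_int l0\<bar> = 2 * pi * \<bar>?u - of_int l0\<bar>"
      by (rule tu)
    also have "\<dots> \<le> 2 * pi * (1/2)" 
    proof (rule mult_left_mono)
      show "\<bar>?u - of_int l0\<bar> \<le> 1/2" using a by linarith
    qed simp
    finally show ?thesis by simp
  qed
  have ge: "\<bar>t - 2 * pi * of_int l\<bar> \<ge> pi" if "l \<noteq> l0" for l
  proof -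
    have "\<bar>?u - of_int l\<bar> \<ge> 1/2"
    proof (cases "l > l0")
      case True then have "of_int l \<ge> of_int l0 + (1::real)" by linarith
      then show ?thesis using a by linarith
    next
      case False then have "of_int l \<le> of_int l0 - (1::real)" using that by linarith
      then show ?thesis using a by linarith
    qed
    moreover have "\<bar>t - 2 * pi * of_int l\<bar> = 2 * pi * \<bar>?u - of_int l\<bar>"
      by (rule tu)
    ultimately show ?thesis using pi_gt_zero mult_left_mono[of "1/2" "\<bar>?u - of_int l\<bar>" "2*pi"] by simp
  qed
  show "dist2pi t = \<bar>t - 2 * pi * of_int l0\<bar>"
    unfolding dist2pi_def
    apply (rule cInf_eq_minimum)
    using key ge by force+
  then show "dist2pi t \<le> pi" using key by simp
qed

lemma density_eq:
  assumes "M \<ge> 1"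
  shows "qpe_density M phi x = hh M phi x"
proof -
  define t where "t = phi - x"
  define l0 where "l0 = floor (t / (2*pi) + 1/2)"
  define D where "D = dist2pi t"
  have D: "D = \<bar>t - 2 * pi * of_int l0\<bar>" "D \<le> pi" "D \<ge> 0"
    using dist2pi_eq[of t] unfolding D_def l0_def by auto
  have cm: "cmod (SS M t) = cmod (SS M D)"
  proof (cases "t - 2 * pi * of_int l0 \<ge> 0")
    case True then show ?thesis using D SS_per[of M t l0] by simp
  next
    case False then have "D = - (t - 2 * pi * of_int l0)" using D by simp
    then have "SS M D = cnj (SS M t)" using SS_per[of M t l0] SS_neg[of M "t - 2 * pi * of_int l0"]
      by simp
    then show ?thesis by simp
  qed
  show ?thesis
  proof (cases "D = 0")
    case True
    then show ?thesis using cm assms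
      by (simp add: qpe_density_def hh_def t_def[symmetric] D_def[symmetric] sinc_def SS_zero power2_eq_square)
  next
    case False
    then have Dp: "D > 0" using D by simp
    have "sin (D/2) > 0" using Dp D(2) by (intro sin_gt_zero) auto
    then have hs: "(cmod (SS M D))\<^sup>2 = (sin (real M * D / 2))\<^sup>2 / (sin (D/2))\<^sup>2"
      by (intro SS_sin) auto
    have "real M / 2 * D \<noteq> 0" using Dp assms by simp
    then show ?thesis using cm hs Dp assms \<open>sin (D/2) > 0\<close>
      by (simp add: qpe_density_def hh_def t_def[symmetric] D_def[symmetric] sinc_def
          power_divide field_simps power2_eq_square)
  qed
qed




lemma SS_expand:
  "complex_of_real ((cmod (SS M t))\<^sup>2) = (\<Sum>k<M. \<Sum>l<M. cis ((real k - real l) * t))"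
proof -
  have "complex_of_real ((cmod (SS M t))\<^sup>2) = SS M t * cnj (SS M t)"
    by (rule complex_norm_square)
  also have "cnj (SS M t) = (\<Sum>l<M. cis (- (real l * t)))" by (simp add: SS_def cis_cnj)
  also have "SS M t * \<dots> = (\<Sum>k<M. \<Sum>l<M. cis (real k * t) * cis (- (real l * t)))"
    by (simp add: SS_def sum_product)
  also have "\<dots> = (\<Sum>k<M. \<Sum>l<M. cis ((real k - real l) * t))"
    by (simp add: cis_mult algebra_simps)
  finally show ?thesis .
qed

lemma integrable_Icc:
  fixes g :: "real \<Rightarrow> 'b::{banach, second_countable_topology}"
  assumes "continuous_on UNIV g"
  shows "integrable lborel (\<lambda>x. indicator {0..2*pi} x *\<^sub>R g x)"
  by (rule borel_integrable_compact) (auto intro: continuous_on_subset[OF assms])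

lemma base_int:
  "integral\<^sup>L lborel (\<lambda>x. indicator {0..2*pi} x *\<^sub>R cis (real_of_int n * x)) = (if n = 0 then 2*pi else 0)"
proof -
  have si: "set_integrable lborel {0..2*pi} (\<lambda>x. cis (real_of_int n * x))"
    unfolding set_integrable_def by (rule integrable_Icc) (intro continuous_intros)
  have eq: "integral\<^sup>L lborel (\<lambda>x. indicator {0..2*pi} x *\<^sub>R cis (real_of_int n * x))
      = integral {0..2*pi} (\<lambda>x. cis (real_of_int n * x))"
    using set_borel_integral_eq_integral(2)[OF si] by (simp add: set_lebesgue_integral_def)
  show ?thesis
  proof (cases "n = 0")
    case True
    then show ?thesis using eq by (simp add: scaleR_conv_of_real)
  next
    case False
    define F where "F = (\<lambda>z::complex. exp (\<i> * of_int n * z) / (\<i> * of_int n))"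
    have "((\<lambda>x. F (of_real x)) has_vector_derivative cis (real_of_int n * x)) (at x within {0..2*pi})" for x
    proof -
      have "(F has_field_derivative exp (\<i> * of_int n * of_real x)) (at (of_real x))"
        unfolding F_def using False
        by (auto intro!: derivative_eq_intros)
      then have "((\<lambda>x. F (of_real x)) has_vector_derivative exp (\<i> * of_int n * of_real x)) (at x within {0..2*pi})"
        by (rule has_vector_derivative_real_field)
      moreover have "exp (\<i> * of_int n * of_real x) = cis (real_of_int n * x)"
        by (simp add: cis_conv_exp mult_ac)
      ultimately show ?thesis by simp
    qed
    then have "((\<lambda>x. cis (real_of_int n * x)) has_integral (F (of_real (2*pi)) - F (of_real 0))) {0..2*pi}"
      by (intro fundamental_theorem_of_calculus) auto
    moreover have "F (of_real (2*pi)) = F (of_real 0)"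
    proof -
      have "exp (\<i> * of_int n * of_real (2*pi)) = cis (2 * pi * of_int n)"
        by (simp add: cis_conv_exp mult_ac)
      also have "\<dots> = 1" by simp
      finally show ?thesis by (simp add: F_def)
    qed
    ultimately show ?thesis using eq False by (simp add: integral_unique)
  qed
qed




lemma count_pairs:
  fixes m :: nat and c :: complex
  assumes "m \<le> M"
  shows "(\<Sum>k<M. \<Sum>l<M. if int m - int k + int l = 0 then c else 0) = of_nat (M - m) * c"
proof -
  have inner: "(\<Sum>l<M. if int m - int k + int l = 0 then c else 0) = (if m \<le> k then c else 0)"
    if "k < M" for k
  proof -
    have "(\<Sum>l<M. if int m - int k + int l = 0 then c else 0) = (\<Sum>l<M. if l = k - m then (if m \<le> k then c else 0) else 0)"
      by (intro sum.cong) auto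
    also have "\<dots> = (if m \<le> k then c else 0)" using that by (auto simp: sum.delta)
    finally show ?thesis .
  qed
  have "(\<Sum>k<M. \<Sum>l<M. if int m - int k + int l = 0 then c else 0) = (\<Sum>k<M. if m \<le> k then c else 0)"
    by (intro sum.cong) (auto simp: inner)
  also have "\<dots> = (\<Sum>k\<in>{k \<in> {..<M}. m \<le> k}. c)"
    using sum.inter_filter[of "{..<M}" "\<lambda>_. c" "\<lambda>k. m \<le> k"] by simp
  also have "\<dots> = (\<Sum>k\<in>{m..<M}. c)" by (rule sum.cong) auto
  also have "\<dots> = of_nat (M - m) * c" by simp
  finally show ?thesis .
qed

lemma moment:
  fixes m :: nat
  assumes "m \<le> M" "M \<ge> 1"
  shows "integral\<^sup>L lborel (\<lambda>x. indicator {0..2*pi} x *\<^sub>R (hh M phi x *\<^sub>R cis (real m * x)))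
     = complex_of_real ((real M - real m) / real M) * cis (real m * phi)"
proof -
  define c where "c = (\<lambda>k l::nat. cis ((real k - real l) * phi) / complex_of_real (2 * pi * real M))"
  define g where "g = (\<lambda>k l::nat. \<lambda>x. indicator {0..2*pi} x *\<^sub>R cis (real_of_int (int m - int k + int l) * x))"
  have pt: "indicator {0..2*pi} x *\<^sub>R (hh M phi x *\<^sub>R cis (real m * x)) = (\<Sum>k<M. \<Sum>l<M. c k l * g k l x)" for x
  proof -
    have "hh M phi x *\<^sub>R cis (real m * x) = complex_of_real (hh M phi x) * cis (real m * x)"
      by (simp add: scaleR_conv_of_real)
    also have "complex_of_real (hh M phi x) = (\<Sum>k<M. \<Sum>l<M. cis ((real k - real l) * (phi - x))) / complex_of_real (2 * pi * real M)"
      unfolding hh_def by (simp add: SS_expand[symmetric])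
    finally have "hh M phi x *\<^sub>R cis (real m * x) = (\<Sum>k<M. \<Sum>l<M. cis ((real k - real l) * (phi - x)) * cis (real m * x)) / complex_of_real (2 * pi * real M)"
      by (simp add: sum_distrib_right)
    also have "\<dots> = (\<Sum>k<M. \<Sum>l<M. c k l * cis (real_of_int (int m - int k + int l) * x))"
      unfolding c_def by (simp add: sum_divide_distrib cis_mult algebra_simps)
    finally show ?thesis unfolding g_def
      by (simp add: scaleR_conv_of_real sum_distrib_left mult_ac)
  qed
  have gi: "integrable lborel (g k l)" for k l
    unfolding g_def by (rule integrable_Icc) (intro continuous_intros)
  have "integral\<^sup>L lborel (\<lambda>x. indicator {0..2*pi} x *\<^sub>R (hh M phi x *\<^sub>R cis (real m * x)))
     = (\<Sum>k<M. \<Sum>l<M. c k l * integral\<^sup>L lborel (g k l))"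
    unfolding pt
  proof -
    have "integral\<^sup>L lborel (\<lambda>x. \<Sum>k<M. \<Sum>l<M. c k l * g k l x) = (\<Sum>k<M. integral\<^sup>L lborel (\<lambda>x. \<Sum>l<M. c k l * g k l x))"
      by (rule Bochner_Integration.integral_sum[where f="\<lambda>k x. \<Sum>l<M. c k l * g k l x"]) (auto intro!: Bochner_Integration.integrable_sum integrable_mult_right gi)
    also have "\<dots> = (\<Sum>k<M. \<Sum>l<M. integral\<^sup>L lborel (\<lambda>x. c k l * g k l x))"
      by (intro sum.cong refl Bochner_Integration.integral_sum[where f="\<lambda>l x. c k l * g k l x" for k] integrable_mult_right gi)
    finally show "integral\<^sup>L lborel (\<lambda>x. \<Sum>k<M. \<Sum>l<M. c k l * g k l x) = (\<Sum>k<M. \<Sum>l<M. c k l * integral\<^sup>L lborel (g k l))"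
      by simp
  qed
  also have "\<dots> = (\<Sum>k<M. \<Sum>l<M. if int m - int k + int l = 0 then cis (real m * phi) / of_nat M else 0)"
  proof (intro sum.cong refl)
    fix k l assume "k \<in> {..<M}" "l \<in> {..<M}"
    show "c k l * integral\<^sup>L lborel (g k l) = (if int m - int k + int l = 0 then cis (real m * phi) / of_nat M else 0)"
    proof (cases "int m - int k + int l = 0")
      case True
      then have "real k - real l = real m" by linarith
      then have "cis ((real k - real l) * phi) = cis (real m * phi)" by (simp only:)
      then show ?thesis using True unfolding g_def c_def base_int by simp
    next
      case False
      then show ?thesis unfolding g_def base_int by simp
    qed
  qed
  also have "\<dots> = of_nat (M - m) * (cis (real m * phi) / of_nat M)" by (rule count_pairs[OF assms(1)])
  also have "\<dots> = complex_of_real ((real M - real m) / real M) * cis (real m * phi)"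
    using assms by (simp add: of_nat_diff field_simps)
  finally show ?thesis .
qed




lemma theta_aux: "(\<lambda>N::nat. (1 + 1 / (real N - 1))\<^sup>2 - 1) \<in> \<Theta>(\<lambda>N. 1 / real N)"
  by real_asymp

lemma hh_cont: "continuous_on UNIV (hh M phi)"
proof -
  have "hh M phi = (\<lambda>x. (cmod (SS M (phi-x)))\<^sup>2 * (1/(2*pi*real M)))" by (auto simp: hh_def)
  then show ?thesis unfolding SS_def by (simp only:) (intro continuous_intros)
qed

lemma hh_meas[measurable]: "hh M phi \<in> borel_measurable lborel"
  using borel_measurable_continuous_onI[OF hh_cont] by simp

lemma hh_nonneg: "hh M phi x \<ge> 0"
  unfolding hh_def by simp

lemma qpe_dist_eq: "M \<ge> 1 \<Longrightarrow> qpe_dist M phi = density lborel (\<lambda>x. ennreal (indicator {0..<2*pi} x * hh M phi x))"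
  unfolding qpe_dist_def using density_eq by presburger

lemma AE_ind: "AE x in lborel. indicator {0..<2*pi} x = (indicator {0..2*pi} x :: real)"
  using AE_lborel_singleton[of "2*pi"] by eventually_elim (auto simp: indicator_def)

lemma int_dist:
  fixes f :: "real \<Rightarrow> 'b::{banach, second_countable_topology}"
  assumes "M \<ge> 1" and f[measurable]: "f \<in> borel_measurable lborel"
  shows "integral\<^sup>L (qpe_dist M phi) f = integral\<^sup>L lborel (\<lambda>x. indicator {0..2*pi} x *\<^sub>R (hh M phi x *\<^sub>R f x))"
proof -
  have "integral\<^sup>L (qpe_dist M phi) f = integral\<^sup>L lborel (\<lambda>x. (indicator {0..<2*pi} x * hh M phi x) *\<^sub>R f x)"
    unfolding qpe_dist_eq[OF assms(1)]
    by (rule integral_density) (auto simp: hh_nonneg)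
  also have "\<dots> = integral\<^sup>L lborel (\<lambda>x. indicator {0..2*pi} x *\<^sub>R (hh M phi x *\<^sub>R f x))"
    by (rule integral_cong_AE) (use AE_ind in \<open>auto elim!: eventually_mono\<close>)
  finally show ?thesis .
qed

lemma int_hh: "M \<ge> 1 \<Longrightarrow> integral\<^sup>L lborel (\<lambda>x. indicator {0..2*pi} x *\<^sub>R hh M phi x) = 1"
proof -
  assume M: "M \<ge> 1"
  have "complex_of_real (integral\<^sup>L lborel (\<lambda>x. indicator {0..2*pi} x *\<^sub>R hh M phi x))
      = integral\<^sup>L lborel (\<lambda>x. indicator {0..2*pi} x *\<^sub>R (hh M phi x *\<^sub>R cis (real 0 * x)))"
    by (simp flip: integral_complex_of_real add: scaleR_conv_of_real)
  also have "\<dots> = 1" using moment[of 0 M phi] M by simp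
  finally show ?thesis by simp
qed

lemma re_comb:
  assumes "m1 \<le> M" "m2 \<le> M" "M \<ge> 1"
  shows "integral\<^sup>L lborel (\<lambda>x. Re (a * (indicator {0..2*pi} x *\<^sub>R (hh M phi x *\<^sub>R cis (real m1 * x)))
            + b * (indicator {0..2*pi} x *\<^sub>R (hh M phi x *\<^sub>R cis (real m2 * x)))))
     = Re (a * (complex_of_real ((real M - real m1) / real M) * cis (real m1 * phi))
         + b * (complex_of_real ((real M - real m2) / real M) * cis (real m2 * phi)))"
proof -
  define A where "A = (\<lambda>m x. indicator {0..2*pi} x *\<^sub>R (hh M phi x *\<^sub>R cis (real m * x)))"
  have i: "integrable lborel (A m)" for m
    unfolding A_def by (rule integrable_Icc) (intro continuous_intros hh_cont)
  have iF: "integrable lborel (\<lambda>x. a * A m1 x + b * A m2 x)"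
    by (intro Bochner_Integration.integrable_add integrable_mult_right i)
  have "integral\<^sup>L lborel (\<lambda>x. Re (a * A m1 x + b * A m2 x)) = Re (integral\<^sup>L lborel (\<lambda>x. a * A m1 x + b * A m2 x))"
    by (rule integral_bounded_linear[OF bounded_linear_Re iF])
  also have "integral\<^sup>L lborel (\<lambda>x. a * A m1 x + b * A m2 x) = a * integral\<^sup>L lborel (A m1) + b * integral\<^sup>L lborel (A m2)"
    by (subst Bochner_Integration.integral_add) (auto intro!: integrable_mult_right i)
  finally have c: "integral\<^sup>L lborel (\<lambda>x. Re (a * A m1 x + b * A m2 x)) = Re (a * integral\<^sup>L lborel (A m1) + b * integral\<^sup>L lborel (A m2))" .
  have m1: "integral\<^sup>L lborel (A m1) = complex_of_real ((real M - real m1) / real M) * cis (real m1 * phi)"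
    unfolding A_def by (rule moment[OF assms(1,3)])
  have m2: "integral\<^sup>L lborel (A m2) = complex_of_real ((real M - real m2) / real M) * cis (real m2 * phi)"
    unfolding A_def by (rule moment[OF assms(2,3)])
  from c show ?thesis unfolding m1 m2 by (simp only: A_def)
qed




lemma Re_ofr_cis: "Re (complex_of_real a * cis t) = a * cos t"
  by simp

lemma pt_sin: "i *\<^sub>R (h *\<^sub>R (sin (x - phi))\<^sup>2) = Re (complex_of_real (1/2) * (i *\<^sub>R (h *\<^sub>R cis (real 0 * x)))
   + (- cis (-2*phi) / 2) * (i *\<^sub>R (h *\<^sub>R cis (real 2 * x))))"
proof -
  have e: "i *\<^sub>R (h *\<^sub>R cis y) = complex_of_real (i*h) * cis y" for y by (simp add: scaleR_conv_of_real)
  have a: "complex_of_real (1/2) * (complex_of_real (i*h) * cis (real 0 * x)) = complex_of_real (i*h/2) * cis 0"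
    by simp
  have b: "(- cis (-2*phi) / 2) * (complex_of_real (i*h) * cis (real 2 * x)) = complex_of_real (-(i*h)/2) * cis (2*x - 2*phi)"
  proof -
    have "cis (-2*phi) * cis (real 2 * x) = cis (2*x - 2*phi)" by (simp add: cis_mult)
    then show ?thesis by (simp add: field_simps)
  qed
  have s: "(sin (x - phi))\<^sup>2 = (1 - cos (2*x - 2*phi))/2" using cos_double_sin[of "x-phi"] by (simp add: algebra_simps)
  show ?thesis unfolding e a b Re_ofr_cis plus_complex.sel s by (simp add: field_simps)
qed

lemma pt_var: "i *\<^sub>R (h *\<^sub>R (cmod (complex_of_real c * cis x - cis phi))\<^sup>2) = Re (complex_of_real (c\<^sup>2 + 1) * (i *\<^sub>R (h *\<^sub>R cis (real 0 * x)))
   + (- 2 * complex_of_real c * cis (-phi)) * (i *\<^sub>R (h *\<^sub>R cis (real 1 * x))))"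
proof -
  have e: "i *\<^sub>R (h *\<^sub>R cis y) = complex_of_real (i*h) * cis y" for y by (simp add: scaleR_conv_of_real)
  have a: "complex_of_real (c\<^sup>2 + 1) * (complex_of_real (i*h) * cis (real 0 * x)) = complex_of_real ((c\<^sup>2 + 1) * (i*h)) * cis 0"
    by simp
  have b: "(- 2 * complex_of_real c * cis (-phi)) * (complex_of_real (i*h) * cis (real 1 * x)) = complex_of_real (- 2 * c * (i*h)) * cis (x - phi)"
  proof -
    have "cis (-phi) * cis (real 1 * x) = cis (x - phi)" by (simp add: cis_mult)
    then show ?thesis by (simp add: field_simps)
  qed
  have s: "(cmod (complex_of_real c * cis x - cis phi))\<^sup>2 = c\<^sup>2 + 1 - 2 * c * cos (x - phi)"
  proof -
    have "(cmod (complex_of_real c * cis x - cis phi))\<^sup>2 = (c * cos x - cos phi)\<^sup>2 + (c * sin x - sin phi)\<^sup>2"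
      by (simp add: cmod_power2)
    also have "\<dots> = c\<^sup>2 + 1 - 2 * c * (cos x * cos phi + sin x * sin phi)"
    proof -
      have q1: "cos x * cos x + sin x * sin x = 1" using sin_cos_squared_add[of x] by (simp add: power2_eq_square)
      have q2: "cos phi * cos phi + sin phi * sin phi = 1" using sin_cos_squared_add[of phi] by (simp add: power2_eq_square)
      show ?thesis unfolding power2_eq_square using q1 q2 by algebra
    qed
    also have "\<dots> = c\<^sup>2 + 1 - 2 * c * cos (x - phi)" by (simp add: cos_diff)
    finally show ?thesis .
  qed
  show ?thesis unfolding e a b Re_ofr_cis plus_complex.sel s by (simp add: field_simps)
qed




lemma cont_meas: "continuous_on UNIV f \<Longrightarrow> f \<in> borel_measurable lborel"
  using borel_measurable_continuous_onI by simp

lemma ps: assumes "M \<ge> 1" shows "prob_space (qpe_dist M phi)"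
proof
  define g where "g = (\<lambda>x. indicator {0..<2*pi} x * hh M phi x)"
  have gm: "g \<in> borel_measurable lborel" unfolding g_def by measurable
  have ig2: "integrable lborel (\<lambda>x. indicator {0..2*pi} x *\<^sub>R hh M phi x)"
    by (rule integrable_Icc[OF hh_cont])
  have ae: "AE x in lborel. indicator {0..2*pi} x *\<^sub>R hh M phi x = g x"
    using AE_ind by eventually_elim (simp add: g_def)
  have ig: "integrable lborel g"
    using integrable_cong_AE[OF _ gm ae] ig2 by simp
  have "integral\<^sup>L lborel (\<lambda>x. indicator {0..2*pi} x *\<^sub>R hh M phi x) = integral\<^sup>L lborel g"
    by (rule integral_cong_AE[OF _ gm ae]) (use ig2 in \<open>simp add: borel_measurable_integrable\<close>)
  then have gi: "integral\<^sup>L lborel g = 1" using int_hh[OF assms] by simp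
  have "emeasure (qpe_dist M phi) (space (qpe_dist M phi)) = (\<integral>\<^sup>+ x. ennreal (g x) \<partial>lborel)"
    unfolding qpe_dist_eq[OF assms] g_def[symmetric]
    by (subst emeasure_density) (use gm in \<open>auto simp: g_def\<close>)
  also have "\<dots> = ennreal (integral\<^sup>L lborel g)"
    by (rule nn_integral_eq_integral[OF ig]) (auto simp: g_def hh_nonneg)
  finally show "emeasure (qpe_dist M phi) (space (qpe_dist M phi)) = 1" using gi by simp
qed




lemma E_cis: assumes "M \<ge> 1"
  shows "integral\<^sup>L (qpe_dist M phi) (\<lambda>x. cis x) = complex_of_real (1 - 1 / real M) * cis phi"
proof -
  have "integral\<^sup>L (qpe_dist M phi) (\<lambda>x. cis x) = integral\<^sup>L lborel (\<lambda>x. indicator {0..2*pi} x *\<^sub>R (hh M phi x *\<^sub>R cis (real 1 * x)))"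
    using int_dist[OF assms cont_meas, of cis phi] by (simp add: continuous_on_cis)
  also have "\<dots> = complex_of_real ((real M - real 1) / real M) * cis (real 1 * phi)"
    using assms by (intro moment) auto
  also have "(real M - real 1) / real M = 1 - 1 / real M" using assms by (simp add: field_simps)
  finally show ?thesis by simp
qed

lemma E_sin: assumes "M \<ge> 2"
  shows "integral\<^sup>L (qpe_dist M phi) (\<lambda>x. (sin (x - phi))\<^sup>2) = 1 / real M"
proof -
  have "integral\<^sup>L (qpe_dist M phi) (\<lambda>x. (sin (x - phi))\<^sup>2) = integral\<^sup>L lborel (\<lambda>x. indicator {0..2*pi} x *\<^sub>R (hh M phi x *\<^sub>R (sin (x - phi))\<^sup>2))"
    using assms by (intro int_dist cont_meas) (auto intro!: continuous_intros)
  also have "\<dots> = integral\<^sup>L lborel (\<lambda>x. Re (complex_of_real (1/2) * (indicator {0..2*pi} x *\<^sub>R (hh M phi x *\<^sub>R cis (real 0 * x)))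
   + (- cis (-2*phi) / 2) * (indicator {0..2*pi} x *\<^sub>R (hh M phi x *\<^sub>R cis (real 2 * x)))))"
    by (simp only: pt_sin)
  also have "\<dots> = Re (complex_of_real (1/2) * (complex_of_real ((real M - real 0) / real M) * cis (real 0 * phi))
         + (- cis (-2*phi) / 2) * (complex_of_real ((real M - real 2) / real M) * cis (real 2 * phi)))"
    using assms by (intro re_comb) auto
  also have "\<dots> = 1 / real M"
  proof -
    have "cis (-2*phi) * cis (real 2 * phi) = 1" by (simp add: cis_mult)
    then have "(- cis (-2*phi) / 2) * (complex_of_real ((real M - real 2) / real M) * cis (real 2 * phi))
       = complex_of_real (- ((real M - 2) / real M) / 2)"
      by (simp add: field_simps)
    moreover have "complex_of_real (1/2) * (complex_of_real ((real M - real 0) / real M) * cis (real 0 * phi)) = complex_of_real (1/2)"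
      using assms by simp
    ultimately show ?thesis using assms by (simp add: field_simps)
  qed
  finally show ?thesis .
qed

lemma var_eq: assumes "N \<ge> 2"
  shows "qpe_est_var N phi = (1 + 1 / (real N - 1))\<^sup>2 - 1"
proof -
  define c where "c = 1 + 1 / (real N - 1)"
  have N1: "N \<ge> 1" using assms by simp
  have "qpe_est_var N phi = integral\<^sup>L lborel (\<lambda>x. indicator {0..2*pi} x *\<^sub>R (hh N phi x *\<^sub>R (cmod (complex_of_real c * cis x - cis phi))\<^sup>2))"
    unfolding qpe_est_var_def c_def using N1 by (intro int_dist cont_meas) (auto intro!: continuous_intros)
  also have "\<dots> = integral\<^sup>L lborel (\<lambda>x. Re (complex_of_real (c\<^sup>2 + 1) * (indicator {0..2*pi} x *\<^sub>R (hh N phi x *\<^sub>R cis (real 0 * x)))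
   + (- 2 * complex_of_real c * cis (-phi)) * (indicator {0..2*pi} x *\<^sub>R (hh N phi x *\<^sub>R cis (real 1 * x)))))"
    by (simp only: pt_var)
  also have "\<dots> = Re (complex_of_real (c\<^sup>2 + 1) * (complex_of_real ((real N - real 0) / real N) * cis (real 0 * phi))
         + (- 2 * complex_of_real c * cis (-phi)) * (complex_of_real ((real N - real 1) / real N) * cis (real 1 * phi)))"
    using assms by (intro re_comb) auto
  also have "\<dots> = c\<^sup>2 - 1"
  proof -
    have "(- 2 * complex_of_real c * cis (-phi)) * (complex_of_real ((real N - real 1) / real N) * cis (real 1 * phi))
       = complex_of_real (- 2 * c * ((real N - 1) / real N)) * (cis (-phi) * cis phi)"
      by (simp add: mult_ac)
    also have "cis (-phi) * cis phi = 1" by (simp add: cis_mult)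
    also have "- 2 * c * ((real N - 1) / real N) = -2"
      using assms unfolding c_def by (simp add: field_simps)
    finally have b: "(- 2 * complex_of_real c * cis (-phi)) * (complex_of_real ((real N - real 1) / real N) * cis (real 1 * phi)) = -2" by simp
    have a: "complex_of_real (c\<^sup>2 + 1) * (complex_of_real ((real N - real 0) / real N) * cis (real 0 * phi)) = complex_of_real (c\<^sup>2 + 1)"
      using assms by simp
    show ?thesis unfolding a b by simp
  qed
  finally show ?thesis unfolding c_def .
qed

theorem mainTheorem9:
  fixes M :: nat and phi :: real
  assumes "M \<ge> 2"
  shows "prob_space (qpe_dist M phi)
    \<and> integral\<^sup>L (qpe_dist M phi) (\<lambda>x. cis x) = complex_of_real (1 - 1 / real M) * cis phi
    \<and> integral\<^sup>L (qpe_dist M phi) (\<lambda>x. (sin (x - phi))\<^sup>2) = 1 / real M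
    \<and> integral\<^sup>L (qpe_dist M phi) (\<lambda>x. complex_of_real (1 + 1 / (real M - 1)) * cis x) = cis phi
    \<and> (\<lambda>N. qpe_est_var N phi) \<in> \<Theta>(\<lambda>N. 1 / real N)"
proof (intro conjI)
  have M1: "M \<ge> 1" using assms by simp
  show "prob_space (qpe_dist M phi)" by (rule ps[OF M1])
  show "integral\<^sup>L (qpe_dist M phi) (\<lambda>x. cis x) = complex_of_real (1 - 1 / real M) * cis phi"
    by (rule E_cis[OF M1])
  show "integral\<^sup>L (qpe_dist M phi) (\<lambda>x. (sin (x - phi))\<^sup>2) = 1 / real M"
    by (rule E_sin[OF assms])
  have "integral\<^sup>L (qpe_dist M phi) (\<lambda>x. complex_of_real (1 + 1 / (real M - 1)) * cis x)
      = complex_of_real (1 + 1 / (real M - 1)) * (complex_of_real (1 - 1 / real M) * cis phi)"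
    by (simp only: integral_mult_right_zero E_cis[OF M1])
  also have "\<dots> = complex_of_real ((1 + 1 / (real M - 1)) * (1 - 1 / real M)) * cis phi"
    by simp
  also have "(1 + 1 / (real M - 1)) * (1 - 1 / real M) = 1"
    using assms by (simp add: field_simps)
  finally show "integral\<^sup>L (qpe_dist M phi) (\<lambda>x. complex_of_real (1 + 1 / (real M - 1)) * cis x) = cis phi"
    by simp
  have ev: "eventually (\<lambda>N. qpe_est_var N phi = (1 + 1 / (real N - 1))\<^sup>2 - 1) at_top"
    using eventually_ge_at_top[of "2::nat"] by eventually_elim (rule var_eq)
  show "(\<lambda>N. qpe_est_var N phi) \<in> \<Theta>(\<lambda>N. 1 / real N)"
    using landau_theta.cong_ex[OF ev, of "\<lambda>N. 1 / real N" "\<lambda>N. 1 / real N"] theta_aux by simp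
qed


end
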